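(* Let $\pi=(\pi_n^{n+1}\colon X_{n+1}\to X_n)_{n\ge1}$ be an inverse sequence of continuous maps between compact metric spaces. Then the following are equivalent: (1) $\pi$ satisfies MLC(1); (2) for any $n\ge1$ and $m\ge n+1$, $\pi_n^{n+1}(X_{n+1})=\pi_n^m(X_m)$; (3) for every $n\ge1$, $\hat{X}_n=\pi_n^{n+1}(X_{n+1})$.
   Context: For $m\ge n\ge1$, $\pi_n^m\colon X_m\to X_n$ is the identity if $m=n$ and $\pi_n^{n+1}\circ\pi_{n+1}^{n+2}\circ\cdots\circ\pi_{m-1}^m$ if $m>n$. $\hat{X}_n=\bigcap_{m\ge n}\pi_n^m(X_m)$. $\pi$ satisfies MLC(1) if $\pi_n^{n+1}(X_{n+1})=\pi_n^{n+2}(X_{n+2})$ for every $n\ge1$. *)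

theory Defs
  imports "HOL-Analysis.Analysis"
begin

text \<open>An inverse sequence is given by spaces X n (n \<ge> 1) and bonding maps p n : X (n+1) \<rightarrow> X n.
  The composite pi_nm p n k is pi_n^{n+k} = p n \<circ> p (n+1) \<circ> ... \<circ> p (n+k-1).\<close>

primrec pi_iter :: "(nat \<Rightarrow> 'a \<Rightarrow> 'a) \<Rightarrow> nat \<Rightarrow> nat \<Rightarrow> 'a \<Rightarrow> 'a" where
  "pi_iter p n 0 = id"
| "pi_iter p n (Suc k) = pi_iter p n k \<circ> p (n + k)"

definition pi_nm :: "(nat \<Rightarrow> 'a \<Rightarrow> 'a) \<Rightarrow> nat \<Rightarrow> nat \<Rightarrow> 'a \<Rightarrow> 'a" where
  "pi_nm p n m = pi_iter p n (m - n)"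

definition Xhat :: "(nat \<Rightarrow> 'a set) \<Rightarrow> (nat \<Rightarrow> 'a \<Rightarrow> 'a) \<Rightarrow> nat \<Rightarrow> 'a set" where
  "Xhat X p n = (\<Inter>m\<in>{n..}. pi_nm p n m ` X m)"

definition MLC1 :: "(nat \<Rightarrow> 'a set) \<Rightarrow> (nat \<Rightarrow> 'a \<Rightarrow> 'a) \<Rightarrow> bool" where
  "MLC1 X p \<longleftrightarrow> (\<forall>n\<ge>1. p n ` X (Suc n) = pi_nm p n (n + 2) ` X (n + 2))"

end

theory Submission
  imports Defs
begin

lemma pi_nm_same: "pi_nm p n n = id"
  by (simp add: pi_nm_def)

lemma pi_nm_Suc: "m \<ge> n \<Longrightarrow> pi_nm p n (Suc m) = pi_nm p n m \<circ> p m"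
  by (simp add: pi_nm_def Suc_diff_le)

lemma pi_nm_one: "pi_nm p n (Suc n) = p n"
  using pi_nm_Suc[of n n p] by (simp add: pi_nm_same)

lemma pi_nm_two: "pi_nm p n (n + 2) = p n \<circ> p (Suc n)"
  using pi_nm_Suc[of n "Suc n" p] by (simp add: pi_nm_one)

lemma pi_nm_two': "pi_nm p n (Suc (Suc n)) = p n \<circ> p (Suc n)"
  using pi_nm_two[of p n] by simp

lemma pi_nm_maps:
  assumes maps: "\<And>n. n \<ge> 1 \<Longrightarrow> p n ` X (Suc n) \<subseteq> X n" and "n \<ge> 1"
  shows "m \<ge> n \<Longrightarrow> pi_nm p n m ` X m \<subseteq> X n"
proof (induction m)
  case 0 then show ?case by (simp add: pi_nm_same)
next
  case (Suc m)
  show ?case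
  proof (cases "Suc m = n")
    case True then show ?thesis by (simp add: pi_nm_same)
  next
    case False
    then have "m \<ge> n" using Suc by simp
    then have "pi_nm p n (Suc m) ` X (Suc m) = pi_nm p n m ` p m ` X (Suc m)"
      by (simp add: pi_nm_Suc image_comp)
    also have "\<dots> \<subseteq> pi_nm p n m ` X m" using maps[of m] \<open>m \<ge> n\<close> \<open>n \<ge> 1\<close>
      by (intro image_mono) simp
    also have "\<dots> \<subseteq> X n" using Suc.IH \<open>m \<ge> n\<close> by simp
    finally show ?thesis .
  qed
qed

lemma mlc_step:
  assumes mlc: "MLC1 X p" and "n \<ge> 1"
  shows "m \<ge> n + 1 \<Longrightarrow> pi_nm p n m ` X m = p n ` X (Suc n)"
proof (induction m)
  case 0 then show ?case by simp
next
  case (Suc m)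
  show ?case
  proof (cases "Suc m = n + 1")
    case True then show ?thesis by (simp add: pi_nm_one)
  next
    case False
    then have m1: "m \<ge> n + 1" using Suc by simp
    then obtain k where k: "m = Suc k" "k \<ge> n" by (cases m) auto
    have k1: "k \<ge> 1" using k \<open>n \<ge> 1\<close> by simp
    have e: "p k ` p (Suc k) ` X (Suc (Suc k)) = p k ` X (Suc k)"
    proof -
      have "p k ` X (Suc k) = pi_nm p k (k + 2) ` X (k + 2)" using mlc k1 unfolding MLC1_def by blast
      also have "\<dots> = p k ` p (Suc k) ` X (Suc (Suc k))"
        by (simp add: pi_nm_two' image_comp)
      finally show ?thesis by simp
    qed
    have "pi_nm p n (Suc m) ` X (Suc m) = pi_nm p n k ` p k ` p (Suc k) ` X (Suc (Suc k))"
      using k by (simp add: pi_nm_Suc image_comp)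
    also have "\<dots> = pi_nm p n k ` p k ` X (Suc k)" using e by simp
    also have "\<dots> = pi_nm p n m ` X m" using k by (simp add: pi_nm_Suc image_comp)
    finally show ?thesis using Suc.IH m1 by simp
  qed
qed

theorem lemma2p1:
  fixes X :: "nat \<Rightarrow> 'a::metric_space set" and p :: "nat \<Rightarrow> 'a \<Rightarrow> 'a"
  assumes compact: "\<And>n. n \<ge> 1 \<Longrightarrow> compact (X n)"
    and cont: "\<And>n. n \<ge> 1 \<Longrightarrow> continuous_on (X (Suc n)) (p n)"
    and maps: "\<And>n. n \<ge> 1 \<Longrightarrow> p n ` X (Suc n) \<subseteq> X n"
  shows "(MLC1 X p \<longleftrightarrow> (\<forall>n\<ge>1. \<forall>m\<ge>n+1. p n ` X (Suc n) = pi_nm p n m ` X m))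
       \<and> (MLC1 X p \<longleftrightarrow> (\<forall>n\<ge>1. Xhat X p n = p n ` X (Suc n)))"
proof -
  have A: "MLC1 X p \<Longrightarrow> (\<forall>n\<ge>1. \<forall>m\<ge>n+1. p n ` X (Suc n) = pi_nm p n m ` X m)"
  proof (intro allI impI)
    fix n m :: nat assume "MLC1 X p" "n \<ge> 1" "m \<ge> n + 1"
    then show "p n ` X (Suc n) = pi_nm p n m ` X m" using mlc_step[of X p n m] by simp
  qed
  have B: "(\<forall>n\<ge>1. \<forall>m\<ge>n+1. p n ` X (Suc n) = pi_nm p n m ` X m) \<Longrightarrow> MLC1 X p"
    unfolding MLC1_def by simp
  have C: "Xhat X p n = p n ` X (Suc n)"
    if H: "\<forall>m\<ge>n+1. p n ` X (Suc n) = pi_nm p n m ` X m" and n: "n \<ge> 1" for n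
  proof
    show "Xhat X p n \<subseteq> p n ` X (Suc n)"
    proof -
      have "Xhat X p n \<subseteq> pi_nm p n (Suc n) ` X (Suc n)"
        unfolding Xhat_def by (rule INT_lower) simp
      then show ?thesis unfolding pi_nm_one .
    qed
    show "p n ` X (Suc n) \<subseteq> Xhat X p n"
      unfolding Xhat_def
    proof (rule INT_greatest)
      fix m assume "m \<in> {n..}"
      then have "m = n \<or> m \<ge> n + 1" by auto
      then show "p n ` X (Suc n) \<subseteq> pi_nm p n m ` X m"
      proof
        assume "m = n"
        then show ?thesis using maps[OF n] by (simp add: pi_nm_same)
      next
        assume "m \<ge> n + 1"
        then have "p n ` X (Suc n) = pi_nm p n m ` X m" using H by blast
        then show ?thesis by (rule equalityD1)
      qed
    qed
  qed
  have D: "MLC1 X p" if H: "\<forall>n\<ge>1. Xhat X p n = p n ` X (Suc n)"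
    unfolding MLC1_def
  proof (intro allI impI)
    fix n :: nat assume n: "n \<ge> 1"
    have s1: "pi_nm p n (n+2) ` X (n+2) \<subseteq> p n ` X (Suc n)"
    proof -
      have "pi_nm p n (n+2) ` X (n+2) = p n ` p (Suc n) ` X (Suc (Suc n))"
        by (simp add: pi_nm_two' image_comp)
      also have "\<dots> \<subseteq> p n ` X (Suc n)" using maps[of "Suc n"] by (intro image_mono) simp
      finally show ?thesis .
    qed
    have "Xhat X p n \<subseteq> pi_nm p n (n+2) ` X (n+2)"
      unfolding Xhat_def by (rule INT_lower) simp
    then show "p n ` X (Suc n) = pi_nm p n (n + 2) ` X (n + 2)" using H n s1 by auto
  qed
  have E: "(\<forall>n\<ge>1. \<forall>m\<ge>n+1. p n ` X (Suc n) = pi_nm p n m ` X m) \<Longrightarrow> (\<forall>n\<ge>1. Xhat X p n = p n ` X (Suc n))"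
  proof (intro allI impI)
    fix n :: nat
    assume "\<forall>n\<ge>1. \<forall>m\<ge>n+1. p n ` X (Suc n) = pi_nm p n m ` X m" "n \<ge> 1"
    then show "Xhat X p n = p n ` X (Suc n)" using C[of n] by simp
  qed
  show ?thesis
  proof (intro conjI iffI)
    assume "MLC1 X p" then show "\<forall>n\<ge>1. \<forall>m\<ge>n+1. p n ` X (Suc n) = pi_nm p n m ` X m" by (rule A)
  next
    assume "\<forall>n\<ge>1. \<forall>m\<ge>n+1. p n ` X (Suc n) = pi_nm p n m ` X m" then show "MLC1 X p" by (rule B)
  next
    assume "MLC1 X p" then show "\<forall>n\<ge>1. Xhat X p n = p n ` X (Suc n)" by (intro E A)
  next
    assume "\<forall>n\<ge>1. Xhat X p n = p n ` X (Suc n)" then show "MLC1 X p" by (rule D)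
  qed
qed

end
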